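(* Let $\mathbf A$ be the Płonka sum of a semilattice directed system of metamorphisms $\{\xi_{pq}:\mathbf A_p\Rightarrow\mathbf A_q: p\preceq q\text{ in }\mathbf I\}$ between algebras of a finite type $\tau$ (with $\mathbf I$ having a least element if $\tau$ contains constants). Then $\mathbf A$ is locally finite if and only if every $\mathbf A_p$ ($p\in I$) is locally finite.
   Context: An algebra is locally finite if every finitely generated subalgebra is finite. A metamorphism $f:\mathbf A\Rightarrow\mathbf B$ between algebras of type $\tau$ assigns to each $n$-ary symbol $\sigma$ maps $f^{\sigma0},\dots,f^{\sigma n}:A\to B$ with $f^{\sigma0}(\sigma^{\mathbf A}(a_1,\dots,a_n))=\sigma^{\mathbf B}(f^{\sigma1}(a_1),\dots,f^{\sigma n}(a_n))$ (for constants $f^{\omega0}(\omega^{\mathbf A})=\omega^{\mathbf B}$); composition and identity are componentwise. A semilattice directed system of metamorphisms over a join-semilattice $\mathbf I=\langle I,\vee\rangle$ (order $\preceq$) is a family of pairwise disjoint algebras $\mathbf A_p$ of type $\tau$ with metamorphisms $\xi_{pq}:\mathbf A_p\Rightarrow\mathbf A_q$ for $p\preceq q$, $\xi_{pp}$ the identity, $\xi_{qr}\circ\xi_{pq}=\xi_{pr}$. Its Płonka sum is the algebra on $\biguplus_pA_p$ with $\sigma(a_1,\dots,a_n):=\sigma^{\mathbf A_q}(\xi^{\sigma1}_{p_1q}(a_1),\dots,\xi^{\sigma n}_{p_nq}(a_n))$ for $a_i\in A_{p_i}$, $q=p_1\vee\dots\vee p_n$, and $\omega:=\omega^{\mathbf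 A_\bot}$ for each constant $\omega$, where $\bot$ is the least element of $\mathbf I$. *)

theory Defs
  imports Main
begin

text \<open>A type \<tau> is given by a set S of operation symbols with arity function ar.\<close>

definition is_algebra :: "'s set \<Rightarrow> ('s \<Rightarrow> nat) \<Rightarrow> 'a set \<Rightarrow> ('s \<Rightarrow> 'a list \<Rightarrow> 'a) \<Rightarrow> bool" where
  "is_algebra S ar C f \<longleftrightarrow>
     (\<forall>\<sigma>\<in>S. \<forall>xs. length xs = ar \<sigma> \<and> set xs \<subseteq> C \<longrightarrow> f \<sigma> xs \<in> C)"

inductive_set generated :: "'s set \<Rightarrow> ('s \<Rightarrow> nat) \<Rightarrow> ('s \<Rightarrow> 'a list \<Rightarrow> 'a) \<Rightarrow> 'a set \<Rightarrow> 'a set"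
  for S ar f X where
  gen_base: "x \<in> X \<Longrightarrow> x \<in> generated S ar f X"
| gen_op: "\<sigma> \<in> S \<Longrightarrow> length xs = ar \<sigma> \<Longrightarrow> \<forall>x\<in>set xs. x \<in> generated S ar f X
            \<Longrightarrow> f \<sigma> xs \<in> generated S ar f X"

definition locally_finite :: "'s set \<Rightarrow> ('s \<Rightarrow> nat) \<Rightarrow> 'a set \<Rightarrow> ('s \<Rightarrow> 'a list \<Rightarrow> 'a) \<Rightarrow> bool" where
  "locally_finite S ar C f \<longleftrightarrow>
     (\<forall>X. finite X \<and> X \<subseteq> C \<longrightarrow> finite (generated S ar f X))"

text \<open>A metamorphism m : (CA,fA) \<Rightarrow> (CB,fB); its components are m \<sigma> j for j = 0..ar \<sigma>.\<close>
definition metamorphism ::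
  "'s set \<Rightarrow> ('s \<Rightarrow> nat) \<Rightarrow> 'a set \<Rightarrow> ('s \<Rightarrow> 'a list \<Rightarrow> 'a) \<Rightarrow> 'b set \<Rightarrow> ('s \<Rightarrow> 'b list \<Rightarrow> 'b)
    \<Rightarrow> ('s \<Rightarrow> nat \<Rightarrow> 'a \<Rightarrow> 'b) \<Rightarrow> bool" where
  "metamorphism S ar CA fA CB fB m \<longleftrightarrow>
     (\<forall>\<sigma>\<in>S. (\<forall>j\<le>ar \<sigma>. \<forall>a\<in>CA. m \<sigma> j a \<in> CB) \<and>
        (\<forall>xs. length xs = ar \<sigma> \<and> set xs \<subseteq> CA \<longrightarrow>
           m \<sigma> 0 (fA \<sigma> xs) = fB \<sigma> (map (\<lambda>(j, x). m \<sigma> j x) (zip [1..<Suc (ar \<sigma>)] xs))))"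

definition join_semilattice :: "'i set \<Rightarrow> ('i \<Rightarrow> 'i \<Rightarrow> 'i) \<Rightarrow> bool" where
  "join_semilattice I join \<longleftrightarrow>
     (\<forall>p\<in>I. \<forall>q\<in>I. join p q \<in> I) \<and>
     (\<forall>p\<in>I. join p p = p) \<and>
     (\<forall>p\<in>I. \<forall>q\<in>I. join p q = join q p) \<and>
     (\<forall>p\<in>I. \<forall>q\<in>I. \<forall>r\<in>I. join (join p q) r = join p (join q r))"

definition sl_le :: "('i \<Rightarrow> 'i \<Rightarrow> 'i) \<Rightarrow> 'i \<Rightarrow> 'i \<Rightarrow> bool" where
  "sl_le join p q \<longleftrightarrow> join p q = q"

definition sl_directed_system ::
  "'s set \<Rightarrow> ('s \<Rightarrow> nat) \<Rightarrow> 'i set \<Rightarrow> ('i \<Rightarrow> 'i \<Rightarrow> 'i) \<Rightarrow> 'i \<Rightarrow> ('i \<Rightarrow> 'a set)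
    \<Rightarrow> ('i \<Rightarrow> 's \<Rightarrow> 'a list \<Rightarrow> 'a) \<Rightarrow> ('i \<Rightarrow> 'i \<Rightarrow> 's \<Rightarrow> nat \<Rightarrow> 'a \<Rightarrow> 'a) \<Rightarrow> bool" where
  "sl_directed_system S ar I join bt A F \<xi> \<longleftrightarrow>
     join_semilattice I join \<and>
     ((\<exists>\<sigma>\<in>S. ar \<sigma> = 0) \<longrightarrow> bt \<in> I \<and> (\<forall>p\<in>I. sl_le join bt p)) \<and>
     (\<forall>p\<in>I. \<forall>q\<in>I. p \<noteq> q \<longrightarrow> A p \<inter> A q = {}) \<and>
     (\<forall>p\<in>I. is_algebra S ar (A p) (F p)) \<and>
     (\<forall>p\<in>I. \<forall>q\<in>I. sl_le join p q \<longrightarrow> metamorphism S ar (A p) (F p) (A q) (F q) (\<xi> p q)) \<and>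
     (\<forall>p\<in>I. \<forall>\<sigma>\<in>S. \<forall>j\<le>ar \<sigma>. \<forall>a\<in>A p. \<xi> p p \<sigma> j a = a) \<and>
     (\<forall>p\<in>I. \<forall>q\<in>I. \<forall>r\<in>I. sl_le join p q \<and> sl_le join q r \<longrightarrow>
        (\<forall>\<sigma>\<in>S. \<forall>j\<le>ar \<sigma>. \<forall>a\<in>A p. \<xi> q r \<sigma> j (\<xi> p q \<sigma> j a) = \<xi> p r \<sigma> j a))"

definition pl_idx :: "'i set \<Rightarrow> ('i \<Rightarrow> 'a set) \<Rightarrow> 'a \<Rightarrow> 'i" where
  "pl_idx I A a = (THE p. p \<in> I \<and> a \<in> A p)"

definition pl_join_idx :: "'i set \<Rightarrow> ('i \<Rightarrow> 'i \<Rightarrow> 'i) \<Rightarrow> 'i \<Rightarrow> ('i \<Rightarrow> 'a set) \<Rightarrow> 'a list \<Rightarrow> 'i" where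
  "pl_join_idx I join bt A xs =
     (if xs = [] then bt
      else fold join (map (pl_idx I A) (tl xs)) (pl_idx I A (hd xs)))"

definition plonka_carrier :: "'i set \<Rightarrow> ('i \<Rightarrow> 'a set) \<Rightarrow> 'a set" where
  "plonka_carrier I A = (\<Union>p\<in>I. A p)"

definition plonka_ops ::
  "'i set \<Rightarrow> ('i \<Rightarrow> 'i \<Rightarrow> 'i) \<Rightarrow> 'i \<Rightarrow> ('i \<Rightarrow> 'a set) \<Rightarrow> ('i \<Rightarrow> 's \<Rightarrow> 'a list \<Rightarrow> 'a)
    \<Rightarrow> ('i \<Rightarrow> 'i \<Rightarrow> 's \<Rightarrow> nat \<Rightarrow> 'a \<Rightarrow> 'a) \<Rightarrow> 's \<Rightarrow> 'a list \<Rightarrow> 'a" where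
  "plonka_ops I join bt A F \<xi> \<sigma> xs =
     (let q = pl_join_idx I join bt A xs in
      F q \<sigma> (map (\<lambda>(j, x). \<xi> (pl_idx I A x) q \<sigma> j x) (zip [1..<Suc (length xs)] xs)))"

end

theory Submission imports Defs begin

definition ubd :: "'i set \<Rightarrow> ('i \<Rightarrow> 'i \<Rightarrow> 'i) \<Rightarrow> 'i set \<Rightarrow> 'i \<Rightarrow> bool" where
  "ubd I join P v \<longleftrightarrow> v \<in> I \<and> (\<forall>p\<in>P. sl_le join p v)"

definition islub :: "'i set \<Rightarrow> ('i \<Rightarrow> 'i \<Rightarrow> 'i) \<Rightarrow> 'i set \<Rightarrow> 'i \<Rightarrow> bool" where
  "islub I join P v \<longleftrightarrow> ubd I join P v \<and> (\<forall>w. ubd I join P w \<longrightarrow> sl_le join v w)"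

context
  fixes I :: "'i set" and join
  assumes js: "join_semilattice I join"
begin

lemma jcl: "p \<in> I \<Longrightarrow> q \<in> I \<Longrightarrow> join p q \<in> I" using js unfolding join_semilattice_def by blast
lemma jidem: "p \<in> I \<Longrightarrow> join p p = p" using js unfolding join_semilattice_def by blast
lemma jcomm: "p \<in> I \<Longrightarrow> q \<in> I \<Longrightarrow> join p q = join q p" using js unfolding join_semilattice_def by blast
lemma jassoc: "p \<in> I \<Longrightarrow> q \<in> I \<Longrightarrow> r \<in> I \<Longrightarrow> join (join p q) r = join p (join q r)"
  using js unfolding join_semilattice_def by blast

lemma le_refl: "p \<in> I \<Longrightarrow> sl_le join p p" by (simp add: sl_le_def jidem)
lemma le_antisym: "p \<in> I \<Longrightarrow> q \<in> I \<Longrightarrow> sl_le join p q \<Longrightarrow> sl_le join q p \<Longrightarrow> p = q"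
  unfolding sl_le_def using jcomm by metis
lemma le_trans: "p \<in> I \<Longrightarrow> q \<in> I \<Longrightarrow> r \<in> I \<Longrightarrow> sl_le join p q \<Longrightarrow> sl_le join q r \<Longrightarrow> sl_le join p r"
  unfolding sl_le_def using jassoc by metis
lemma ub1: "p \<in> I \<Longrightarrow> q \<in> I \<Longrightarrow> sl_le join p (join p q)"
  unfolding sl_le_def using jassoc jidem by metis
lemma ub2: "p \<in> I \<Longrightarrow> q \<in> I \<Longrightarrow> sl_le join q (join p q)"
  using ub1 jcomm by metis
lemma jleast: "p \<in> I \<Longrightarrow> q \<in> I \<Longrightarrow> r \<in> I \<Longrightarrow> sl_le join p r \<Longrightarrow> sl_le join q r \<Longrightarrow> sl_le join (join p q) r"
  unfolding sl_le_def using jassoc by metis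

lemma islub_cong: "(\<And>w. ubd I join P w \<longleftrightarrow> ubd I join Q w) \<Longrightarrow> islub I join P v \<longleftrightarrow> islub I join Q v"
  unfolding islub_def by auto

lemma islub_unique: "islub I join P v \<Longrightarrow> islub I join P w \<Longrightarrow> v = w"
  unfolding islub_def ubd_def using le_antisym by blast

lemma islub_single: "p \<in> I \<Longrightarrow> islub I join {p} p"
  unfolding islub_def ubd_def using le_refl by auto

lemma islub_fold: "a \<in> I \<Longrightarrow> set ys \<subseteq> I \<Longrightarrow> islub I join (insert a (set ys)) (fold join ys a)"
proof (induction ys arbitrary: a)
  case Nil
  then show ?case using islub_single by simp
next
  case (Cons y ys)
  have yI: "y \<in> I" using Cons by auto
  have "islub I join (insert (join y a) (set ys)) (fold join ys (join y a))"
    using Cons jcl yI by auto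
  moreover have "ubd I join (insert (join y a) (set ys)) w \<longleftrightarrow> ubd I join (insert a (set (y#ys))) w" for w
  proof
    assume h: "ubd I join (insert (join y a) (set ys)) w"
    then have wI: "w \<in> I" and l: "sl_le join (join y a) w" and r: "\<forall>p\<in>set ys. sl_le join p w"
      unfolding ubd_def by auto
    have "sl_le join y w" using le_trans[OF yI jcl[OF yI Cons.prems(1)] wI ub1[OF yI Cons.prems(1)] l] .
    moreover have "sl_le join a w" using le_trans[OF Cons.prems(1) jcl[OF yI Cons.prems(1)] wI ub2[OF yI Cons.prems(1)] l] .
    ultimately show "ubd I join (insert a (set (y#ys))) w" using wI r unfolding ubd_def by auto
  next
    assume h: "ubd I join (insert a (set (y#ys))) w"
    then have wI: "w \<in> I" and "sl_le join y w" "sl_le join a w" and r: "\<forall>p\<in>set ys. sl_le join p w"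
      unfolding ubd_def by auto
    then have "sl_le join (join y a) w" using jleast yI Cons.prems(1) by blast
    then show "ubd I join (insert (join y a) (set ys)) w" using wI r unfolding ubd_def by auto
  qed
  ultimately show ?case
    using islub_cong[of "insert (join y a) (set ys)" "insert a (set (y#ys))" "fold join ys (join y a)"] by simp
qed

lemma islub_Union:
  assumes "islub I join V q" "\<And>v. v \<in> V \<Longrightarrow> islub I join (P v) v" "\<And>v. v \<in> V \<Longrightarrow> P v \<subseteq> I"
  shows "islub I join (\<Union>v\<in>V. P v) q"
proof -
  have "ubd I join (\<Union>v\<in>V. P v) w \<longleftrightarrow> ubd I join V w" for w
  proof
    assume h: "ubd I join (\<Union>v\<in>V. P v) w"
    show "ubd I join V w" unfolding ubd_def
    proof (intro conjI ballI)
      show "w \<in> I" using h ubd_def by metis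
      fix v assume "v \<in> V"
      then have "ubd I join (P v) w" using h unfolding ubd_def by auto
      then show "sl_le join v w" using assms(2) \<open>v \<in> V\<close> unfolding islub_def by blast
    qed
  next
    assume h: "ubd I join V w"
    show "ubd I join (\<Union>v\<in>V. P v) w" unfolding ubd_def
    proof (intro conjI ballI)
      show "w \<in> I" using h ubd_def by metis
      fix p assume "p \<in> (\<Union>v\<in>V. P v)"
      then obtain v where v: "v \<in> V" "p \<in> P v" by auto
      have "sl_le join p v" "v \<in> I" using assms(2)[OF v(1)] v(2) unfolding islub_def ubd_def by auto
      moreover have "sl_le join v w" using h v(1) unfolding ubd_def by auto
      ultimately show "sl_le join p w" using le_trans assms(3) v \<open>w \<in> I\<close> by blast
    qed
  qed
  then show ?thesis using islub_cong assms(1) by blast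
qed

end

lemma map_zip_ball: "(\<And>j x. (j,x) \<in> set (zip ns xs) \<Longrightarrow> P (g j x)) \<Longrightarrow> \<forall>y\<in>set (map (\<lambda>(j,x). g j x) (zip ns xs)). P y"
  by auto

lemma map_zip_sub: "(\<And>j x. (j,x) \<in> set (zip ns xs) \<Longrightarrow> g j x \<in> B) \<Longrightarrow> set (map (\<lambda>(j,x). g j x) (zip ns xs)) \<subseteq> B"
  by auto

lemma map_zip_all: "(\<And>j x. (j,x) \<in> set (zip ns xs) \<Longrightarrow> g j x = x) \<Longrightarrow> \<forall>(j,x)\<in>set (zip ns xs). g j x = x"
  by auto

lemma map_zip_id: "length ns = length xs \<Longrightarrow> (\<forall>(j,x)\<in>set (zip ns xs). g j x = x) \<Longrightarrow> map (\<lambda>(j,x). g j x) (zip ns xs) = xs"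
proof (induction xs arbitrary: ns)
  case Nil then show ?case by simp
next
  case (Cons a xs) then show ?case by (cases ns) auto
qed

lemma zip_mem: "(j,x) \<in> set (zip [1..<Suc n] xs) \<Longrightarrow> length xs = n \<Longrightarrow> x \<in> set xs \<and> 1 \<le> j \<and> j \<le> n"
proof -
  assume a: "(j,x) \<in> set (zip [1..<Suc n] xs)" "length xs = n"
  then obtain i where i: "i < min (length [1..<Suc n]) (length xs)" "[1..<Suc n] ! i = j" "xs ! i = x"
    unfolding set_zip by auto
  then have "i < n" using a(2) by (simp del: upt_Suc)
  then have "j = 1 + i" using i(2) by (simp del: upt_Suc add: nth_upt)
  then show ?thesis using i a(2) \<open>i < n\<close> by auto
qed


theorem theorem4p7:
  fixes S :: "'s set" and ar :: "'s \<Rightarrow> nat"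
    and I :: "'i set" and join :: "'i \<Rightarrow> 'i \<Rightarrow> 'i" and bt :: 'i
    and A :: "'i \<Rightarrow> 'a set" and F :: "'i \<Rightarrow> 's \<Rightarrow> 'a list \<Rightarrow> 'a"
    and \<xi> :: "'i \<Rightarrow> 'i \<Rightarrow> 's \<Rightarrow> nat \<Rightarrow> 'a \<Rightarrow> 'a"
  assumes "finite S"
    and "sl_directed_system S ar I join bt A F \<xi>"
  shows "locally_finite S ar (plonka_carrier I A) (plonka_ops I join bt A F \<xi>)
         \<longleftrightarrow> (\<forall>p\<in>I. locally_finite S ar (A p) (F p))"
proof -
  note D = assms(2)[unfolded sl_directed_system_def]
  have js: "join_semilattice I join" using D by (elim conjE)
  have D2: "(\<exists>\<sigma>\<in>S. ar \<sigma> = 0) \<longrightarrow> bt \<in> I \<and> (\<forall>p\<in>I. sl_le join bt p)" using D by (elim conjE)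
  have btI: "\<And>\<sigma>. \<sigma> \<in> S \<Longrightarrow> ar \<sigma> = 0 \<Longrightarrow> bt \<in> I" using D2 by blast
  have D3: "\<forall>p\<in>I. \<forall>q\<in>I. p \<noteq> q \<longrightarrow> A p \<inter> A q = {}" using D by (elim conjE)
  have disj: "\<And>p q. p \<in> I \<Longrightarrow> q \<in> I \<Longrightarrow> p \<noteq> q \<Longrightarrow> A p \<inter> A q = {}" using D3 by blast
  have D4: "\<forall>p\<in>I. is_algebra S ar (A p) (F p)" using D by (elim conjE)
  have alg: "\<And>p \<sigma> xs. p \<in> I \<Longrightarrow> \<sigma> \<in> S \<Longrightarrow> length xs = ar \<sigma> \<Longrightarrow> set xs \<subseteq> A p \<Longrightarrow> F p \<sigma> xs \<in> A p"
    using D4 unfolding is_algebra_def by blast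
  have D5: "\<forall>p\<in>I. \<forall>q\<in>I. sl_le join p q \<longrightarrow> metamorphism S ar (A p) (F p) (A q) (F q) (\<xi> p q)"
    using D by (elim conjE)
  have D6: "\<forall>p\<in>I. \<forall>\<sigma>\<in>S. \<forall>j\<le>ar \<sigma>. \<forall>a\<in>A p. \<xi> p p \<sigma> j a = a" using D by (elim conjE)
  have meta: "\<And>p q \<sigma> j a. p \<in> I \<Longrightarrow> q \<in> I \<Longrightarrow> sl_le join p q \<Longrightarrow> \<sigma> \<in> S \<Longrightarrow> j \<le> ar \<sigma> \<Longrightarrow> a \<in> A p
     \<Longrightarrow> \<xi> p q \<sigma> j a \<in> A q"
  proof -
    fix p q \<sigma> j a assume h: "p \<in> I" "q \<in> I" "sl_le join p q" "\<sigma> \<in> S" "j \<le> ar \<sigma>" "a \<in> A p"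
    then have "metamorphism S ar (A p) (F p) (A q) (F q) (\<xi> p q)" using D5 by blast
    then show "\<xi> p q \<sigma> j a \<in> A q" using h(4-6) unfolding metamorphism_def by blast
  qed
  have idm: "\<And>p \<sigma> j a. p \<in> I \<Longrightarrow> \<sigma> \<in> S \<Longrightarrow> j \<le> ar \<sigma> \<Longrightarrow> a \<in> A p \<Longrightarrow> \<xi> p p \<sigma> j a = a"
    using D6 by blast
  define idx where "idx = pl_idx I A"
  have idx: "\<And>p x. p \<in> I \<Longrightarrow> x \<in> A p \<Longrightarrow> idx x = p"
    unfolding idx_def pl_idx_def by (rule the_equality) (use disj in auto)
  define Pl where "Pl = plonka_ops I join bt A F \<xi>"
  have Pl_eq: "\<And>\<sigma> xs. Pl \<sigma> xs = F (pl_join_idx I join bt A xs) \<sigma>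
      (map (\<lambda>(j, x). \<xi> (idx x) (pl_join_idx I join bt A xs) \<sigma> j x) (zip [1..<Suc (length xs)] xs))"
    unfolding Pl_def plonka_ops_def idx_def Let_def by simp
  have Pl_nil: "\<And>\<sigma>. Pl \<sigma> [] = F bt \<sigma> []" unfolding Pl_eq by (simp add: pl_join_idx_def)
  have pjoin: "\<And>xs. xs \<noteq> [] \<Longrightarrow> idx ` set xs \<subseteq> I \<Longrightarrow> islub I join (idx ` set xs) (pl_join_idx I join bt A xs)"
  proof -
    fix xs :: "'a list" assume ne: "xs \<noteq> []" and sub: "idx ` set xs \<subseteq> I"
    obtain h t where ht: "xs = h # t" using ne by (cases xs) auto
    have "islub I join (insert (idx h) (set (map idx t))) (fold join (map idx t) (idx h))"
      using islub_fold[OF js, of "idx h" "map idx t"] sub ht by simp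
    moreover have "insert (idx h) (set (map idx t)) = idx ` set xs" using ht by auto
    moreover have "pl_join_idx I join bt A xs = fold join (map idx t) (idx h)"
      using ht unfolding pl_join_idx_def idx_def by simp
    ultimately show "islub I join (idx ` set xs) (pl_join_idx I join bt A xs)" by simp
  qed
  show ?thesis
  proof
    assume LF: "locally_finite S ar (plonka_carrier I A) (plonka_ops I join bt A F \<xi>)"
    show "\<forall>p\<in>I. locally_finite S ar (A p) (F p)"
      unfolding locally_finite_def
    proof (intro ballI allI impI)
      fix p X assume pI: "p \<in> I" and X: "finite X \<and> X \<subseteq> A p"
      define K where "K = (\<lambda>\<sigma>. F p \<sigma> []) ` {\<sigma>\<in>S. ar \<sigma> = 0}"
      have KA: "K \<subseteq> A p" unfolding K_def using alg[OF pI, of _ "[]"] by auto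
      have finK: "finite K" unfolding K_def using assms(1) by simp
      define X' where "X' = X \<union> K"
      have X'C: "finite X' \<and> X' \<subseteq> plonka_carrier I A"
        unfolding X'_def plonka_carrier_def using X KA finK pI by blast
      have "t \<in> generated S ar Pl X' \<and> t \<in> A p" if "t \<in> generated S ar (F p) X" for t
        using that
      proof (induction rule: generated.induct)
        case (gen_base x)
        then show ?case using X unfolding X'_def by (auto intro: generated.gen_base)
      next
        case (gen_op \<sigma> xs)
        have xsA: "set xs \<subseteq> A p" using gen_op(3) by auto
        have FA: "F p \<sigma> xs \<in> A p" using alg[OF pI gen_op(1) gen_op(2) xsA] .
        show ?case
        proof (cases "xs = []")
          case True
          then have "F p \<sigma> xs \<in> K" unfolding K_def using gen_op(1,2) by auto
          then show ?thesis using FA unfolding X'_def by (auto intro: generated.gen_base)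
        next
          case False
          have "\<forall>x\<in>set xs. idx x = p" using xsA idx[OF pI] by blast
          then have im: "idx ` set xs = {p}" using False by (cases xs) auto
          have "islub I join {p} (pl_join_idx I join bt A xs)" using pjoin[OF False] im pI by simp
          then have pj: "pl_join_idx I join bt A xs = p"
            using islub_unique[OF js] islub_single[OF js pI] by blast
          have "map (\<lambda>(j, x). \<xi> (idx x) p \<sigma> j x) (zip [1..<Suc (length xs)] xs) = xs"
          proof (rule map_zip_id)
            show "\<forall>(j, x)\<in>set (zip [1..<Suc (length xs)] xs). \<xi> (idx x) p \<sigma> j x = x"
            proof (rule map_zip_all)
              fix j x assume jx: "(j, x) \<in> set (zip [1..<Suc (length xs)] xs)"
              then have "x \<in> set xs" "j \<le> ar \<sigma>" using zip_mem[OF jx refl] gen_op(2) by auto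
              then show "\<xi> (idx x) p \<sigma> j x = x" using idx[OF pI] xsA idm[OF pI gen_op(1)] by auto
            qed
          qed (simp del: upt_Suc)
          then have "Pl \<sigma> xs = F p \<sigma> xs" unfolding Pl_eq pj by simp
          moreover have "Pl \<sigma> xs \<in> generated S ar Pl X'"
            by (rule generated.gen_op) (use gen_op in auto)
          ultimately show ?thesis using FA by simp
        qed
      qed
      then have "generated S ar (F p) X \<subseteq> generated S ar Pl X'" by blast
      moreover have "finite (generated S ar Pl X')" using LF X'C unfolding locally_finite_def Pl_def by blast
      ultimately show "finite (generated S ar (F p) X)" by (rule finite_subset)
    qed
  next
    assume LF: "\<forall>p\<in>I. locally_finite S ar (A p) (F p)"
    show "locally_finite S ar (plonka_carrier I A) (plonka_ops I join bt A F \<xi>)"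
      unfolding locally_finite_def Pl_def[symmetric]
    proof (intro allI impI)
      fix X assume X: "finite X \<and> X \<subseteq> plonka_carrier I A"
      define P0 where "P0 = idx ` X \<union> (if \<exists>\<sigma>\<in>S. ar \<sigma> = 0 then {bt} else {})"
      have P0I: "P0 \<subseteq> I"
      proof
        fix p assume "p \<in> P0"
        then show "p \<in> I" unfolding P0_def using X btI idx unfolding plonka_carrier_def
          by (auto split: if_splits)
      qed
      have finP0: "finite P0" unfolding P0_def using X by simp
      define J where "J = {v. \<exists>P. P \<subseteq> P0 \<and> P \<noteq> {} \<and> islub I join P v}"
      have JI: "J \<subseteq> I" unfolding J_def islub_def ubd_def by auto
      have "J \<subseteq> (\<lambda>P. THE v. islub I join P v) ` Pow P0"
      proof
        fix v assume "v \<in> J"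
        then obtain P where P: "P \<subseteq> P0" "islub I join P v" unfolding J_def by auto
        have "v = (THE v. islub I join P v)"
          using P(2) islub_unique[OF js] by (metis the_equality)
        then show "v \<in> (\<lambda>P. THE v. islub I join P v) ` Pow P0" using P(1) by auto
      qed
      then have finJ: "finite J" using finP0 by (meson finite_Pow_iff finite_imageI finite_subset)
      define T where "T = generated S ar Pl X"
      have opfact: "pl_join_idx I join bt A xs \<in> J \<and>
           (\<forall>x\<in>set xs. idx x \<in> J \<and> x \<in> A (idx x) \<and> sl_le join (idx x) (pl_join_idx I join bt A xs)) \<and>
           Pl \<sigma> xs \<in> A (pl_join_idx I join bt A xs)"
        if s: "\<sigma> \<in> S" and l: "length xs = ar \<sigma>" and ne: "xs \<noteq> []" and h: "\<forall>x\<in>set xs. \<exists>v\<in>J. x \<in> A v"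
        for \<sigma> xs
      proof -
        have hx: "\<forall>x\<in>set xs. idx x \<in> J \<and> x \<in> A (idx x)"
        proof
          fix x assume "x \<in> set xs"
          then obtain v where v: "v \<in> J" "x \<in> A v" using h by blast
          have "v \<in> I" using v(1) JI by blast
          then have "idx x = v" using idx v(2) by blast
          then show "idx x \<in> J \<and> x \<in> A (idx x)" using v by simp
        qed
        define q where "q = pl_join_idx I join bt A xs"
        have sI: "idx ` set xs \<subseteq> I" using hx JI by blast
        have lq: "islub I join (idx ` set xs) q" unfolding q_def by (rule pjoin[OF ne sI])
        define PP where "PP = (\<lambda>v. SOME P. P \<subseteq> P0 \<and> P \<noteq> {} \<and> islub I join P v)"
        have PP: "PP v \<subseteq> P0 \<and> PP v \<noteq> {} \<and> islub I join (PP v) v" if vJ: "v \<in> J" for v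
        proof -
          obtain P where "P \<subseteq> P0 \<and> P \<noteq> {} \<and> islub I join P v" using vJ unfolding J_def by blast
          then show ?thesis unfolding PP_def by (rule someI)
        qed
        have "islub I join (\<Union>v\<in>idx ` set xs. PP v) q"
        proof (rule islub_Union[OF js lq])
          fix v assume "v \<in> idx ` set xs"
          then have "v \<in> J" using hx by blast
          then show "islub I join (PP v) v" "PP v \<subseteq> I" using PP P0I by blast+
        qed
        moreover have "(\<Union>v\<in>idx ` set xs. PP v) \<subseteq> P0"
        proof
          fix p assume "p \<in> (\<Union>v\<in>idx ` set xs. PP v)"
          then obtain x where "x \<in> set xs" "p \<in> PP (idx x)" by blast
          then show "p \<in> P0" using PP hx by blast
        qed
        moreover have "(\<Union>v\<in>idx ` set xs. PP v) \<noteq> {}"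
        proof -
          obtain x where x: "x \<in> set xs" using ne by (cases xs) auto
          then have "PP (idx x) \<noteq> {}" using PP hx by blast
          then show ?thesis using x by blast
        qed
        ultimately have qJ: "q \<in> J" unfolding J_def by (intro CollectI exI conjI)
        have le: "\<forall>x\<in>set xs. sl_le join (idx x) q" using lq unfolding islub_def ubd_def by blast
        have qI: "q \<in> I" using qJ JI by auto
        have "set (map (\<lambda>(j, x). \<xi> (idx x) q \<sigma> j x) (zip [1..<Suc (length xs)] xs)) \<subseteq> A q"
        proof (rule map_zip_sub)
          fix j x assume jx: "(j, x) \<in> set (zip [1..<Suc (length xs)] xs)"
          then have xs: "x \<in> set xs" "j \<le> ar \<sigma>" using zip_mem[OF jx refl] l by auto
          have "idx x \<in> I" "x \<in> A (idx x)" "sl_le join (idx x) q" using hx le JI xs(1) by blast+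
          then show "\<xi> (idx x) q \<sigma> j x \<in> A q" using meta[OF _ qI _ s xs(2)] by blast
        qed
        then have "Pl \<sigma> xs \<in> A q" unfolding Pl_eq q_def[symmetric] using alg[OF qI s] l by simp
        then show ?thesis using qJ hx le unfolding q_def by simp
      qed
      have inv: "\<exists>v\<in>J. t \<in> A v" if "t \<in> T" for t
        using that unfolding T_def
      proof (induction rule: generated.induct)
        case (gen_base x)
        then obtain p where p: "p \<in> I" "x \<in> A p" using X unfolding plonka_carrier_def by blast
        have "idx x = p" using idx p by blast
        have "{p} \<subseteq> P0" unfolding P0_def using \<open>idx x = p\<close> gen_base by blast
        then have "p \<in> J" unfolding J_def using islub_single[OF js p(1)] by blast
        then show ?case using p by blast
      next
        case (gen_op \<sigma> xs)
        show ?case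
        proof (cases "xs = []")
          case True
          then have a0: "ar \<sigma> = 0" using gen_op(2) by simp
          then have btI': "bt \<in> I" using btI gen_op(1) by blast
          have "bt \<in> P0" unfolding P0_def using a0 gen_op(1) by auto
          then have "bt \<in> J" unfolding J_def using islub_single[OF js btI'] by blast
          moreover have "Pl \<sigma> xs \<in> A bt" using True Pl_nil alg[OF btI' gen_op(1)] a0 by simp
          ultimately show ?thesis by blast
        next
          case False
          then show ?thesis using opfact[OF gen_op(1,2) False] gen_op(3) by blast
        qed
      qed
      have finq: "finite (T \<inter> A q)" if "card {p\<in>J. sl_le join p q} = n" "q \<in> J" for n q
        using that
      proof (induction n arbitrary: q rule: less_induct)
        case (less n q)
        have qI: "q \<in> I" using less JI by auto
        define L where "L = {p\<in>J. sl_le join p q \<and> p \<noteq> q}"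
        have finL: "\<forall>p\<in>L. finite (T \<inter> A p)"
        proof
          fix p assume pL: "p \<in> L"
          have pI: "p \<in> I" using pL JI unfolding L_def by auto
          have sub: "{p'\<in>J. sl_le join p' p} \<subset> {p'\<in>J. sl_le join p' q}"
          proof
            show "{p'\<in>J. sl_le join p' p} \<subseteq> {p'\<in>J. sl_le join p' q}"
              using pL le_trans[OF js _ pI qI] JI unfolding L_def by blast
            have "\<not> sl_le join q p" using pL le_antisym[OF js pI qI] unfolding L_def by blast
            then show "{p'\<in>J. sl_le join p' p} \<noteq> {p'\<in>J. sl_le join p' q}"
              using le_refl[OF js qI] less(3) by blast
          qed
          have "card {p'\<in>J. sl_le join p' p} < n"
            using psubset_card_mono[OF _ sub] finJ less(2) by auto
          then show "finite (T \<inter> A p)" using less(1) pL unfolding L_def by blast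
        qed
        define Y where "Y = (X \<inter> A q) \<union> (\<Union>p\<in>L. \<Union>\<sigma>\<in>S. \<Union>j\<in>{..ar \<sigma>}. \<xi> p q \<sigma> j ` (T \<inter> A p))"
        have finL': "finite L" unfolding L_def using finJ by simp
        have finY: "finite Y" unfolding Y_def
        proof (rule finite_UnI)
          show "finite (X \<inter> A q)" using X by simp
          show "finite (\<Union>p\<in>L. \<Union>\<sigma>\<in>S. \<Union>j\<in>{..ar \<sigma>}. \<xi> p q \<sigma> j ` (T \<inter> A p))"
          proof (rule finite_UN_I[OF finL'])
            fix p assume pL: "p \<in> L"
            show "finite (\<Union>\<sigma>\<in>S. \<Union>j\<in>{..ar \<sigma>}. \<xi> p q \<sigma> j ` (T \<inter> A p))"
            proof (rule finite_UN_I[OF assms(1)])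
              fix \<sigma> show "finite (\<Union>j\<in>{..ar \<sigma>}. \<xi> p q \<sigma> j ` (T \<inter> A p))"
                using finL pL by simp
            qed
          qed
        qed
        have YA: "Y \<subseteq> A q"
        proof
          fix y assume "y \<in> Y"
          then consider "y \<in> X \<inter> A q" | p \<sigma> j a where "p \<in> L" "\<sigma> \<in> S" "j \<le> ar \<sigma>" "a \<in> T \<inter> A p" "y = \<xi> p q \<sigma> j a"
            unfolding Y_def by blast
          then show "y \<in> A q"
          proof cases
            case 1 then show ?thesis by blast
          next
            case (2 p \<sigma> j a)
            have "p \<in> I" "sl_le join p q" using 2(1) JI unfolding L_def by auto
            then show ?thesis using meta[OF _ qI _ 2(2,3)] 2 by blast
          qed
        qed
        have gfin: "finite (generated S ar (F q) Y)" using LF qI finY YA unfolding locally_finite_def by blast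
        have "t \<in> A q \<longrightarrow> t \<in> generated S ar (F q) Y" if "t \<in> T" for t
          using that unfolding T_def
        proof (induction rule: generated.induct)
          case (gen_base x)
          then show ?case unfolding Y_def by (auto intro: generated.gen_base)
        next
          case (gen_op \<sigma> xs)
          show ?case
          proof
            assume inq: "Pl \<sigma> xs \<in> A q"
            show "Pl \<sigma> xs \<in> generated S ar (F q) Y"
            proof (cases "xs = []")
              case True
              then have a0: "ar \<sigma> = 0" using gen_op(2) by simp
              then have btI': "bt \<in> I" using btI gen_op(1) by blast
              have "Pl \<sigma> xs \<in> A bt" using True Pl_nil alg[OF btI' gen_op(1)] a0 by simp
              then have "bt = q" using disj[OF btI' qI] inq by blast
              then have "Pl \<sigma> xs = F q \<sigma> []" using True Pl_nil by simp
              moreover have "F q \<sigma> [] \<in> generated S ar (F q) Y"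
                by (rule generated.gen_op) (use gen_op(1) a0 in auto)
              ultimately show ?thesis by simp
            next
              case False
              have xsT: "\<forall>x\<in>set xs. x \<in> T" using gen_op(3) unfolding T_def by blast
              have of: "pl_join_idx I join bt A xs \<in> J \<and>
                  (\<forall>x\<in>set xs. idx x \<in> J \<and> x \<in> A (idx x) \<and> sl_le join (idx x) (pl_join_idx I join bt A xs)) \<and>
                  Pl \<sigma> xs \<in> A (pl_join_idx I join bt A xs)"
              proof -
                have "\<forall>x\<in>set xs. \<exists>v\<in>J. x \<in> A v" using xsT inv by blast
                then show ?thesis using opfact[OF gen_op(1,2) False] by blast
              qed
              have pq: "pl_join_idx I join bt A xs = q"
              proof (rule ccontr)
                assume ne: "pl_join_idx I join bt A xs \<noteq> q"
                have "pl_join_idx I join bt A xs \<in> I" using of JI by blast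
                then have "A (pl_join_idx I join bt A xs) \<inter> A q = {}" using disj[OF _ qI ne] by blast
                then show False using of inq by blast
              qed
              have "Pl \<sigma> xs = F q \<sigma> (map (\<lambda>(j, x). \<xi> (idx x) q \<sigma> j x) (zip [1..<Suc (length xs)] xs))"
                using Pl_eq pq by simp
              moreover have "F q \<sigma> (map (\<lambda>(j, x). \<xi> (idx x) q \<sigma> j x) (zip [1..<Suc (length xs)] xs))
                  \<in> generated S ar (F q) Y"
              proof (rule generated.gen_op)
                show "\<sigma> \<in> S" using gen_op(1) .
                show "length (map (\<lambda>(j, x). \<xi> (idx x) q \<sigma> j x) (zip [1..<Suc (length xs)] xs)) = ar \<sigma>"
                  using gen_op(2) by simp
                show "\<forall>y\<in>set (map (\<lambda>(j, x). \<xi> (idx x) q \<sigma> j x) (zip [1..<Suc (length xs)] xs)).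
                    y \<in> generated S ar (F q) Y"
                proof (rule map_zip_ball)
                  fix j x assume jx: "(j, x) \<in> set (zip [1..<Suc (length xs)] xs)"
                  then have xs: "x \<in> set xs" "j \<le> ar \<sigma>" using zip_mem[OF jx refl] gen_op(2) by auto
                  have ix: "idx x \<in> J" "x \<in> A (idx x)" "sl_le join (idx x) q" using of xs(1) pq by auto
                  show "\<xi> (idx x) q \<sigma> j x \<in> generated S ar (F q) Y"
                  proof (cases "idx x = q")
                    case True
                    then have "\<xi> (idx x) q \<sigma> j x = x" using idm[OF qI gen_op(1) xs(2)] ix by simp
                    then show ?thesis using gen_op(3) xs(1) ix True by auto
                  next
                    case False
                    then have "idx x \<in> L" unfolding L_def using ix by auto
                    then have "\<xi> (idx x) q \<sigma> j x \<in> Y" unfolding Y_def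
                      using gen_op(1) xs xsT ix by blast
                    then show ?thesis by (rule generated.gen_base)
                  qed
                qed
              qed
              ultimately show ?thesis by simp
            qed
          qed
        qed
        then have "T \<inter> A q \<subseteq> generated S ar (F q) Y" by blast
        then show ?case using gfin finite_subset by blast
      qed
      have "T \<subseteq> (\<Union>q\<in>J. T \<inter> A q)" using inv by blast
      moreover have "finite (\<Union>q\<in>J. T \<inter> A q)" using finJ finq by blast
      ultimately show "finite (generated S ar Pl X)" unfolding T_def by (rule finite_subset)
    qed
  qed
qed

end
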